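(* For all integers $m$ and $n$, \[ L_m \sum_{k = 1}^n ( - 1)^{k(m - 1)} L_{2mk} = ( - 1)^{n(m - 1)} L_{2mn+m} - L_m\,. \]
   Context: $L_i$ denotes the Lucas numbers, defined for all $i\in\mathbb{Z}$ by $L_i=L_{i-1}+L_{i-2}$, $L_0=2$, $L_1=1$; equivalently $L_{-i}=(-1)^iL_i$. Summation convention for an arbitrary integer upper limit: $\sum_{k=a}^{a-1} f(k)=0$, and for $n<a-1$, $\sum_{k=a}^{n} f(k) = -\sum_{k=n+1}^{a-1} f(k)$. *)

theory Defs
  imports Main
begin

fun lucas_nat :: "nat \<Rightarrow> int" where
  "lucas_nat 0 = 2"
| "lucas_nat (Suc 0) = 1"
| "lucas_nat (Suc (Suc n)) = lucas_nat (Suc n) + lucas_nat n"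

definition lucas :: "int \<Rightarrow> int" where
  "lucas i = (if 0 \<le> i then lucas_nat (nat i)
              else (-1) ^ nat (- i) * lucas_nat (nat (- i)))"

definition neg1pow :: "int \<Rightarrow> int" where
  "neg1pow j = (if even j then 1 else -1)"

text \<open>Sum from a to n with the convention for arbitrary integer upper limit:
  empty if n = a - 1, and for n < a - 1 it equals minus the sum from n+1 to a-1.\<close>
definition gsum :: "(int \<Rightarrow> int) \<Rightarrow> int \<Rightarrow> int \<Rightarrow> int" where
  "gsum f a n = (if a - 1 \<le> n then (\<Sum>k\<in>{a..n}. f k) else - (\<Sum>k\<in>{n+1..a-1}. f k))"

end

theory Submission
  imports Defs
begin

lemma neg1pow_add1: "neg1pow (b + 1) = - neg1pow b"
  by (simp add: neg1pow_def)

lemma neg1pow_sub1: "neg1pow (b - 1) = - neg1pow b"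
  by (simp add: neg1pow_def)

lemma lucas_neg_nat: "lucas (- int j) = (-1) ^ j * lucas_nat j"
  by (cases "j = 0") (auto simp: lucas_def)

lemma lucas_nonneg: "lucas (int j) = lucas_nat j"
  by (simp add: lucas_def)

lemma lucas_rec: "lucas (n + 2) = lucas (n + 1) + lucas n"
proof (cases "n \<ge> 0")
  case True
  then obtain j where j: "n = int j" by (metis nonneg_eq_int)
  have "lucas (int (Suc (Suc j))) = lucas (int (Suc j)) + lucas (int j)"
    by (simp only: lucas_nonneg) simp
  then show ?thesis using j by (simp add: add.commute)
next
  case False
  show ?thesis
  proof (cases "n = -1")
    case True
    then show ?thesis by (simp add: lucas_def)
  next
    case False
    define j where "j = nat (- n - 2)"
    with \<open>\<not> n \<ge> 0\<close> False have j: "n = - int j - 2" by simp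
    hence a: "n + 2 = - int j" "n + 1 = - int (Suc j)" "n = - int (Suc (Suc j))" by auto
    have b: "lucas (n + 2) = (-1)^j * lucas_nat j" "lucas (n + 1) = (-1)^(Suc j) * lucas_nat (Suc j)"
      "lucas n = (-1)^(Suc (Suc j)) * lucas_nat (Suc (Suc j))"
      using lucas_neg_nat[of j] lucas_neg_nat[of "Suc j"] lucas_neg_nat[of "Suc (Suc j)"] a by simp_all
    show ?thesis unfolding b by (simp add: algebra_simps)
  qed
qed

lemma lucas_rec': "lucas n = lucas (n + 2) - lucas (n + 1)"
  using lucas_rec[of n] by simp

lemma lucas_prod: "lucas a * lucas b = lucas (a + b) + neg1pow b * lucas (a - b)"
proof -
  define P where "P b \<longleftrightarrow> lucas a * lucas b = lucas (a + b) + neg1pow b * lucas (a - b)" for b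
  have "P b \<and> P (b + 1)" for b
  proof (induct b rule: int_induct[where k = 0])
    case base
    have e: "a - 1 + 2 = a + 1" "a - 1 + 1 = a" by simp_all
    have "lucas (a + 1) = lucas a + lucas (a - 1)" using lucas_rec[of "a - 1"] by (simp only: e)
    then show ?case by (simp add: P_def neg1pow_def lucas_def add.commute)
  next
    case (step1 i)
    hence h: "P i" "P (i + 1)" by auto
    have "P (i + 2)"
    proof -
      have "lucas a * lucas (i + 2) = lucas a * lucas (i + 1) + lucas a * lucas i"
        by (simp add: lucas_rec distrib_left)
      also have "\<dots> = lucas (a + i + 1) + lucas (a + i) - neg1pow i * (lucas (a - i - 1) - lucas (a - i))"
        using h unfolding P_def neg1pow_add1 by (simp add: algebra_simps)
      also have "lucas (a - i - 1) - lucas (a - i) = - lucas (a - (i + 2))"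
        using lucas_rec[of "a - (i+2)"] by (simp add: algebra_simps)
      also have "lucas (a + i + 1) + lucas (a + i) = lucas (a + (i + 2))"
        using lucas_rec[of "a + i"] by (simp add: algebra_simps)
      finally show ?thesis by (simp add: P_def neg1pow_def)
    qed
    then show ?case using h by (simp add: add.assoc)
  next
    case (step2 i)
    hence h: "P i" "P (i + 1)" by auto
    have "P (i - 1)"
    proof -
      have "lucas a * lucas (i - 1) = lucas a * lucas (i + 1) - lucas a * lucas i"
        using lucas_rec[of "i - 1"] by (simp add: algebra_simps)
      also have "\<dots> = lucas (a + i + 1) - lucas (a + i) - neg1pow i * (lucas (a - i - 1) + lucas (a - i))"
        using h unfolding P_def neg1pow_add1 by (simp add: algebra_simps)
      also have "lucas (a - i - 1) + lucas (a - i) = lucas (a - (i - 1))"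
        using lucas_rec[of "a - i - 1"] by (simp add: algebra_simps)
      also have "lucas (a + i + 1) - lucas (a + i) = lucas (a + (i - 1))"
        using lucas_rec[of "a + i - 1"] by (simp add: algebra_simps)
      finally show ?thesis by (simp add: P_def neg1pow_def)
    qed
    then show ?case using h by simp
  qed
  then show ?thesis unfolding P_def by blast
qed

lemma gsum_tele:
  assumes "\<And>k. f k = G k - G (k - 1)"
  shows "gsum f 1 n = G n - G 0"
proof (induct n rule: int_induct[where k = 0])
  case base
  then show ?case by (simp add: gsum_def)
next
  case (step1 i)
  have "{1..i+1} = insert (i+1) {1..i}" using step1 by auto
  hence "(\<Sum>k\<in>{1..i+1}. f k) = f (i+1) + (\<Sum>k\<in>{1..i}. f k)" by simp
  with step1 show ?case by (simp add: gsum_def assms)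
next
  case (step2 i)
  show ?case
  proof (cases "i = 0")
    case True
    then show ?thesis by (simp add: gsum_def assms)
  next
    case False
    with step2 have i: "i < 0" by simp
    have "{i..0} = insert i {i+1..0}" using i by auto
    hence "(\<Sum>k\<in>{i..0}. f k) = f i + (\<Sum>k\<in>{i+1..0}. f k)" by simp
    with step2 i show ?thesis by (simp add: gsum_def assms)
  qed
qed

theorem lemma4:
  fixes m n :: int
  shows "lucas m * gsum (\<lambda>k. neg1pow (k * (m - 1)) * lucas (2 * m * k)) 1 n
         = neg1pow (n * (m - 1)) * lucas (2 * m * n + m) - lucas m"
proof -
  define G where "G k = neg1pow (k * (m - 1)) * lucas (2 * m * k + m)" for k
  have sgn: "neg1pow (k * (m - 1)) * neg1pow m = - neg1pow ((k - 1) * (m - 1))" for k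
    by (simp add: neg1pow_def algebra_simps)
  have "lucas m * gsum (\<lambda>k. neg1pow (k * (m - 1)) * lucas (2 * m * k)) 1 n
      = gsum (\<lambda>k. lucas m * (neg1pow (k * (m - 1)) * lucas (2 * m * k))) 1 n"
    by (simp add: gsum_def sum_distrib_left)
  also have "\<dots> = G n - G 0"
  proof (rule gsum_tele)
    fix k
    have "lucas m * (neg1pow (k * (m - 1)) * lucas (2 * m * k))
        = neg1pow (k * (m - 1)) * (lucas (2*m*k) * lucas m)" by simp
    also have "\<dots> = neg1pow (k * (m - 1)) * lucas (2*m*k + m)
                  + (neg1pow (k * (m - 1)) * neg1pow m) * lucas (2*m*k - m)"
      unfolding lucas_prod[of "2*m*k" m] by (simp add: algebra_simps)
    also have "2*m*k - m = 2 * m * (k - 1) + m" by (simp add: algebra_simps)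
    finally show "lucas m * (neg1pow (k * (m - 1)) * lucas (2 * m * k)) = G k - G (k - 1)"
      by (simp add: G_def sgn)
  qed
  finally show ?thesis by (simp add: G_def neg1pow_def)
qed

end
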